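(* Under the hypergraph setup (with $Q(v,e)\in[0,1]$, $w(e)\in[0,1]$, $n_e\le E$ for every hyperedge $e$, $n_v\le D$ for every vertex $v$, and $\rho_{\max}=\sup_{x\in[0,E]}\rho(x)<\infty$), the generalized transition matrix satisfies $\|\tilde T\|_1\le\sqrt{1+\rho_{\max}ED}$, where $\|\cdot\|_1$ is the matrix norm induced by the vector $\ell_1$-norm (maximum absolute column sum).
   Context: Hypergraph setup: $\mathcal V=\{v_1,\dots,v_N\}$ is a finite vertex set and $\mathcal E$ a finite set of hyperedges (nonempty subsets of $\mathcal V$). $Q\in\mathbb{R}^{N\times|\mathcal E|}$ has entries $Q(v,e)\in[0,1]$ with $Q(v,e)=0$ whenever $v\notin e$. $W$ is the $|\mathcal E|\times|\mathcal E|$ diagonal matrix with entries $w(e)\in[0,1]$. $\delta(e)=\sum_{v}Q(v,e)$. $\rho:[0,\infty)\to[0,\infty)$ is a function and $\rho(D_{\mathcal E})$ is the diagonal matrix with entries $\rho(\delta(e))$. $\tilde d(v)=1+\sum_{e}w(e)Q(v,e)\delta(e)\rho(\delta(e))$ and $\tilde D_{\mathcal V}=\mathrm{diag}(\tilde d(v_1),\dots,\tilde d(v_N))$. The generalized transition matrix is $\tilde T=\tilde D_{\mathcal V}^{-1/2}\big(QW\rho(D_{\mathcal E})Q^\top+I\big)\tilde D_{\mathcal V}^{-1/2}$. $n_e$ denotes the number of vertices in $e$ and $n_v$ the number of hyperedges containing $v$. *)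

theory Defs
  imports Complex_Main
begin

definition hdelta :: "'v set \<Rightarrow> ('v \<Rightarrow> 'v set \<Rightarrow> real) \<Rightarrow> 'v set \<Rightarrow> real" where
  "hdelta V Q e = (\<Sum>v\<in>V. Q v e)"

definition hdeg :: "'v set \<Rightarrow> 'v set set \<Rightarrow> ('v \<Rightarrow> 'v set \<Rightarrow> real) \<Rightarrow> ('v set \<Rightarrow> real)
    \<Rightarrow> (real \<Rightarrow> real) \<Rightarrow> 'v \<Rightarrow> real" where
  "hdeg V Es Q w \<rho> v = 1 + (\<Sum>e\<in>Es. w e * Q v e * hdelta V Q e * \<rho> (hdelta V Q e))"

text \<open>Entry (u,v) of the generalized transition matrix
  D^{-1/2} (Q W rho(D_E) Q^T + I) D^{-1/2}.\<close>
definition genT :: "'v set \<Rightarrow> 'v set set \<Rightarrow> ('v \<Rightarrow> 'v set \<Rightarrow> real) \<Rightarrow> ('v set \<Rightarrow> real)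
    \<Rightarrow> (real \<Rightarrow> real) \<Rightarrow> 'v \<Rightarrow> 'v \<Rightarrow> real" where
  "genT V Es Q w \<rho> u v =
     ((\<Sum>e\<in>Es. Q u e * w e * \<rho> (hdelta V Q e) * Q v e) + (if u = v then 1 else 0))
     / (sqrt (hdeg V Es Q w \<rho> u) * sqrt (hdeg V Es Q w \<rho> v))"

definition mat_norm1 :: "'v set \<Rightarrow> ('v \<Rightarrow> 'v \<Rightarrow> real) \<Rightarrow> real" where
  "mat_norm1 V M = Max ((\<lambda>v. \<Sum>u\<in>V. \<bar>M u v\<bar>) ` V)"

end

theory Submission
  imports Defs
begin

theorem proposition1:
  fixes V :: "'v set" and Es :: "'v set set"
    and Q :: "'v \<Rightarrow> 'v set \<Rightarrow> real" and w :: "'v set \<Rightarrow> real"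
    and \<rho> :: "real \<Rightarrow> real" and E D :: nat
  assumes "finite V" "V \<noteq> {}" "finite Es"
    and "\<forall>e\<in>Es. e \<noteq> {} \<and> e \<subseteq> V"
    and "\<forall>v\<in>V. \<forall>e\<in>Es. 0 \<le> Q v e \<and> Q v e \<le> 1"
    and "\<forall>v\<in>V. \<forall>e\<in>Es. v \<notin> e \<longrightarrow> Q v e = 0"
    and "\<forall>e\<in>Es. 0 \<le> w e \<and> w e \<le> 1"
    and "\<forall>x\<ge>0. 0 \<le> \<rho> x"
    and "\<forall>e\<in>Es. card e \<le> E"
    and "\<forall>v\<in>V. card {e\<in>Es. v \<in> e} \<le> D"
    and "bdd_above (\<rho> ` {0..real E})"
  shows "mat_norm1 V (genT V Es Q w \<rho>)
           \<le> sqrt (1 + (SUP x\<in>{0..real E}. \<rho> x) * real E * real D)"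
proof -
  note fV = assms(1) and fE = assms(3)
  define R where "R = (SUP x\<in>{0..real E}. \<rho> x)"
  define d where "d = hdeg V Es Q w \<rho>"
  define \<delta> where "\<delta> = hdelta V Q"
  have Rge: "\<rho> x \<le> R" if "x \<in> {0..real E}" for x
    unfolding R_def by (rule cSUP_upper[OF that assms(11)])
  have R0: "0 \<le> R" using Rge[of 0] assms(8) by force
  have \<delta>0: "0 \<le> \<delta> e" if "e \<in> Es" for e
    unfolding \<delta>_def hdelta_def using assms(5) that by (intro sum_nonneg) auto
  have \<delta>E: "\<delta> e \<le> real E" if e: "e \<in> Es" for e
  proof -
    have eV: "e \<subseteq> V" using assms(4) e by auto
    have "\<delta> e = (\<Sum>u\<in>V. Q u e)" unfolding \<delta>_def hdelta_def ..
    also have "\<dots> = (\<Sum>u\<in>e. Q u e)"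
      using eV assms(6) e fV by (intro sum.mono_neutral_right) auto
    also have "\<dots> \<le> (\<Sum>u\<in>e. 1)" using eV assms(5) e by (intro sum_mono) auto
    also have "\<dots> = real (card e)" by simp
    also have "\<dots> \<le> real E" using assms(9) e by auto
    finally show ?thesis .
  qed
  have \<rho>R: "\<rho> (\<delta> e) \<le> R" "0 \<le> \<rho> (\<delta> e)" if "e \<in> Es" for e
    using Rge[of "\<delta> e"] \<delta>0[OF that] \<delta>E[OF that] assms(8) by auto
  have term0: "0 \<le> w e * Q v e * \<delta> e * \<rho> (\<delta> e)" if "v \<in> V" "e \<in> Es" for v e
    using assms(5,7) that \<delta>0[OF that(2)] \<rho>R[OF that(2)] by auto
  have d1: "1 \<le> d v" if v: "v \<in> V" for v
    unfolding d_def hdeg_def \<delta>_def[symmetric] using term0[OF v] by (simp add: sum_nonneg)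
  have dle: "d v \<le> 1 + R * real E * real D" if v: "v \<in> V" for v
  proof -
    let ?S = "{e\<in>Es. v \<in> e}"
    have "(\<Sum>e\<in>Es. w e * Q v e * \<delta> e * \<rho> (\<delta> e)) = (\<Sum>e\<in>?S. w e * Q v e * \<delta> e * \<rho> (\<delta> e))"
      using assms(6) v fE by (intro sum.mono_neutral_right) auto
    also have "\<dots> \<le> (\<Sum>e\<in>?S. real E * R)"
    proof (intro sum_mono)
      fix e assume e: "e \<in> ?S"
      hence eE: "e \<in> Es" by auto
      have a: "w e * Q v e \<le> 1" "0 \<le> w e * Q v e"
        using assms(5,7) v eE by (auto intro: mult_le_one)
      have "w e * Q v e * \<delta> e * \<rho> (\<delta> e) = (w e * Q v e) * (\<delta> e * \<rho> (\<delta> e))" by simp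
      also have "\<dots> \<le> 1 * (\<delta> e * \<rho> (\<delta> e))"
        using a \<delta>0[OF eE] \<rho>R[OF eE] by (intro mult_right_mono) auto
      also have "\<dots> \<le> real E * R"
        using \<delta>0[OF eE] \<rho>R[OF eE] \<delta>E[OF eE] by (simp add: mult_mono)
      finally show "w e * Q v e * \<delta> e * \<rho> (\<delta> e) \<le> real E * R" .
    qed
    also have "\<dots> = real (card ?S) * (real E * R)" by simp
    also have "\<dots> \<le> real D * (real E * R)"
      using assms(10) v R0 by (intro mult_right_mono) auto
    finally show ?thesis unfolding d_def hdeg_def \<delta>_def[symmetric] by (simp add: algebra_simps)
  qed
  define A where "A u v = (\<Sum>e\<in>Es. Q u e * w e * \<rho> (\<delta> e) * Q v e) + (if u = v then 1 else 0::real)" for u v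
  have A0: "0 \<le> A u v" if "u \<in> V" "v \<in> V" for u v
    unfolding A_def using assms(5,7) that \<rho>R by (intro add_nonneg_nonneg sum_nonneg) auto
  have Asum: "(\<Sum>u\<in>V. A u v) = d v" if v: "v \<in> V" for v
  proof -
    have "(\<Sum>u\<in>V. A u v) = (\<Sum>u\<in>V. \<Sum>e\<in>Es. Q u e * w e * \<rho> (\<delta> e) * Q v e) + (\<Sum>u\<in>V. if u = v then 1 else 0::real)"
      unfolding A_def by (simp add: sum.distrib)
    also have "(\<Sum>u\<in>V. if u = v then 1 else 0::real) = 1" using v fV by simp
    also have "(\<Sum>u\<in>V. \<Sum>e\<in>Es. Q u e * w e * \<rho> (\<delta> e) * Q v e) = (\<Sum>e\<in>Es. \<Sum>u\<in>V. Q u e * w e * \<rho> (\<delta> e) * Q v e)"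
      by (rule sum.swap)
    also have "\<dots> = (\<Sum>e\<in>Es. w e * Q v e * \<delta> e * \<rho> (\<delta> e))"
      unfolding \<delta>_def hdelta_def by (intro sum.cong refl) (simp add: sum_distrib_left sum_distrib_right algebra_simps)
    finally show ?thesis unfolding d_def hdeg_def \<delta>_def[symmetric] by simp
  qed
  have col: "(\<Sum>u\<in>V. \<bar>genT V Es Q w \<rho> u v\<bar>) \<le> sqrt (d v)" if v: "v \<in> V" for v
  proof -
    have dv: "1 \<le> sqrt (d v)" using d1[OF v] by simp
    have "(\<Sum>u\<in>V. \<bar>genT V Es Q w \<rho> u v\<bar>) = (\<Sum>u\<in>V. A u v / (sqrt (d u) * sqrt (d v)))"
    proof (intro sum.cong refl)
      fix u assume u: "u \<in> V"
      have "genT V Es Q w \<rho> u v = A u v / (sqrt (d u) * sqrt (d v))"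
        unfolding genT_def A_def d_def \<delta>_def ..
      moreover have "0 \<le> A u v / (sqrt (d u) * sqrt (d v))" using A0[OF u v] d1[OF u] d1[OF v] by simp
      ultimately show "\<bar>genT V Es Q w \<rho> u v\<bar> = A u v / (sqrt (d u) * sqrt (d v))" by (simp only: abs_of_nonneg)
    qed
    also have "\<dots> \<le> (\<Sum>u\<in>V. A u v / sqrt (d v))"
    proof (intro sum_mono)
      fix u assume u: "u \<in> V"
      have du: "1 \<le> sqrt (d u)" using d1[OF u] by simp
      have "sqrt (d v) \<le> sqrt (d u) * sqrt (d v)" using du dv by (simp add: mult_right_mono[of 1, simplified])
      thus "A u v / (sqrt (d u) * sqrt (d v)) \<le> A u v / sqrt (d v)"
        using A0[OF u v] dv by (intro divide_left_mono) auto
    qed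
    also have "\<dots> = d v / sqrt (d v)" using Asum[OF v] by (simp add: sum_divide_distrib[symmetric])
    also have "\<dots> = sqrt (d v)" using d1[OF v] by (simp add: real_div_sqrt)
    finally show ?thesis .
  qed
  show ?thesis unfolding mat_norm1_def R_def[symmetric]
  proof (subst Max_le_iff)
    show "finite ((\<lambda>v. \<Sum>u\<in>V. \<bar>genT V Es Q w \<rho> u v\<bar>) ` V)" using fV by simp
    show "(\<lambda>v. \<Sum>u\<in>V. \<bar>genT V Es Q w \<rho> u v\<bar>) ` V \<noteq> {}" using assms(2) by simp
    show "\<forall>a\<in>(\<lambda>v. \<Sum>u\<in>V. \<bar>genT V Es Q w \<rho> u v\<bar>) ` V. a \<le> sqrt (1 + R * real E * real D)"
    proof
      fix a assume "a \<in> (\<lambda>v. \<Sum>u\<in>V. \<bar>genT V Es Q w \<rho> u v\<bar>) ` V"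
      then obtain v where v: "v \<in> V" and a: "a = (\<Sum>u\<in>V. \<bar>genT V Es Q w \<rho> u v\<bar>)" by auto
      have "a \<le> sqrt (d v)" using col[OF v] a by simp
      also have "\<dots> \<le> sqrt (1 + R * real E * real D)" using dle[OF v] by simp
      finally show "a \<le> sqrt (1 + R * real E * real D)" .
    qed
  qed
qed

end
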